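(* For a graph $G$, the following are equivalent: (1) $G$ is a disjoint union of copies of $K_2$; (2) $G$ does not contain a connected subgraph with three vertices; (3) $\mathcal{H}_G=[0,\infty)$; (4) $0\in\mathcal{H}_G$; (5) $\mathcal{H}_G\not\subseteq[1,\infty)$; (6) $CE_H(G)=0$.
   Context: All graphs are finite and simple. For a graph $G=(V,E)$ with $V=\{1,\dots,n\}$ and $I\subset\mathbb{R}$, $\mathcal{P}_G(I)$ is the set of real symmetric positive semidefinite $n\times n$ matrices with entries in $I$ such that $a_{ij}=0$ whenever $i\neq j$ and $(i,j)\notin E$; $\mathcal{P}_G:=\mathcal{P}_G(\mathbb{R})$. For $A$ with nonnegative entries, $A^{\circ\alpha}:=(a_{ij}^\alpha)$ with the convention $0^\alpha:=0$ for all $\alpha$. $\mathcal{H}_G:=\{\alpha\in\mathbb{R}: A^{\circ\alpha}\in\mathcal{P}_G\ \forall A\in\mathcal{P}_G([0,\infty))\}$ and $CE_H(G):=\min\{\alpha\in\mathbb{R}: A^{\circ\beta}\in\mathcal{P}_G \text{ for all } A\in\mathcal{P}_G([0,\infty))\text{ and all }\beta\ge\alpha\}$. *)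

theory Defs
  imports Complex_Main
begin

definition sgraph :: "nat \<Rightarrow> (nat \<Rightarrow> nat \<Rightarrow> bool) \<Rightarrow> bool" where
  "sgraph n E \<longleftrightarrow> (\<forall>i j. E i j \<longrightarrow> i \<in> {1..n} \<and> j \<in> {1..n} \<and> i \<noteq> j \<and> E j i)"

text \<open>Real n x n matrices are functions nat => nat => real, only entries indexed by {1..n} matter.
  Symmetric positive semidefinite:\<close>
definition psd :: "nat \<Rightarrow> (nat \<Rightarrow> nat \<Rightarrow> real) \<Rightarrow> bool" where
  "psd n A \<longleftrightarrow> (\<forall>i\<in>{1..n}. \<forall>j\<in>{1..n}. A i j = A j i) \<and>
     (\<forall>x :: nat \<Rightarrow> real. (\<Sum>i\<in>{1..n}. \<Sum>j\<in>{1..n}. x i * A i j * x j) \<ge> 0)"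

definition inPG :: "nat \<Rightarrow> (nat \<Rightarrow> nat \<Rightarrow> bool) \<Rightarrow> real set \<Rightarrow> (nat \<Rightarrow> nat \<Rightarrow> real) \<Rightarrow> bool" where
  "inPG n E I A \<longleftrightarrow> psd n A \<and>
     (\<forall>i\<in>{1..n}. \<forall>j\<in>{1..n}. A i j \<in> I \<and> (i \<noteq> j \<and> \<not> E i j \<longrightarrow> A i j = 0))"

definition hpow :: "real \<Rightarrow> (nat \<Rightarrow> nat \<Rightarrow> real) \<Rightarrow> (nat \<Rightarrow> nat \<Rightarrow> real)" where
  "hpow \<alpha> A = (\<lambda>i j. if A i j = 0 then 0 else A i j powr \<alpha>)"

definition HG :: "nat \<Rightarrow> (nat \<Rightarrow> nat \<Rightarrow> bool) \<Rightarrow> real set" where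
  "HG n E = {\<alpha>. \<forall>A. inPG n E {0..} A \<longrightarrow> inPG n E UNIV (hpow \<alpha> A)}"

definition CE_H :: "nat \<Rightarrow> (nat \<Rightarrow> nat \<Rightarrow> bool) \<Rightarrow> real" where
  "CE_H n E = (LEAST \<alpha>::real. \<forall>A. inPG n E {0..} A \<longrightarrow>
                 (\<forall>\<beta>\<ge>\<alpha>. inPG n E UNIV (hpow \<beta> A)))"

text \<open>(1): every connected component is a K2 (or an isolated vertex): each vertex has
  at most one neighbour.\<close>
definition union_of_K2 :: "nat \<Rightarrow> (nat \<Rightarrow> nat \<Rightarrow> bool) \<Rightarrow> bool" where
  "union_of_K2 n E \<longleftrightarrow> (\<forall>v\<in>{1..n}. card {u\<in>{1..n}. E v u} \<le> 1)"

text \<open>(2): G contains a connected subgraph on three vertices (equivalently, the induced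
  subgraph on some 3-element vertex set S is connected).\<close>
definition has_connected_sub3 :: "nat \<Rightarrow> (nat \<Rightarrow> nat \<Rightarrow> bool) \<Rightarrow> bool" where
  "has_connected_sub3 n E \<longleftrightarrow> (\<exists>S. S \<subseteq> {1..n} \<and> card S = 3 \<and>
     (\<forall>x\<in>S. \<forall>y\<in>S. (\<lambda>u v. u \<in> S \<and> v \<in> S \<and> E u v)\<^sup>*\<^sup>* x y))"

end

theory Submission
  imports Defs "HOL-Analysis.Analysis"
begin


definition qf :: "nat set \<Rightarrow> (nat \<Rightarrow> nat \<Rightarrow> real) \<Rightarrow> (nat \<Rightarrow> real) \<Rightarrow> real" where
  "qf I A x = (\<Sum>i\<in>I. \<Sum>j\<in>I. x i * A i j * x j)"

definition psdI :: "nat set \<Rightarrow> (nat \<Rightarrow> nat \<Rightarrow> real) \<Rightarrow> bool" where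
  "psdI I A \<longleftrightarrow> (\<forall>i\<in>I. \<forall>j\<in>I. A i j = A j i) \<and> (\<forall>x. qf I A x \<ge> 0)"

lemma psd_psdI: "psd n A = psdI {1..n} A"
  by (simp add: psd_def psdI_def qf_def)

lemma qf_cong: "(\<And>i j. i \<in> I \<Longrightarrow> j \<in> I \<Longrightarrow> A i j = B i j) \<Longrightarrow> qf I A x = qf I B x"
  by (simp add: qf_def)

lemma sum_if_sub: "finite I \<Longrightarrow> J \<subseteq> I \<Longrightarrow> (\<Sum>j\<in>I. if j \<in> J then g j else 0) = (\<Sum>j\<in>J. g j)"
  by (simp add: sum.inter_restrict[symmetric] Int_absorb1)

lemma qf_restrict:
  assumes "finite I" "J \<subseteq> I"
  shows "qf I A (\<lambda>k. if k \<in> J then x k else 0) = qf J A x"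
proof -
  have fJ: "finite J" using assms finite_subset by blast
  have "qf I A (\<lambda>k. if k \<in> J then x k else 0) = (\<Sum>i\<in>I. if i \<in> J then (\<Sum>j\<in>J. x i * A i j * x j) else 0)"
    unfolding qf_def
    apply (rule sum.cong[OF refl])
    subgoal for i
    proof (cases "i \<in> J")
      case True
      have "(\<Sum>j\<in>I. x i * A i j * (if j \<in> J then x j else 0)) = (\<Sum>j\<in>I. if j \<in> J then x i * A i j * x j else 0)"
        by (rule sum.cong) auto
      then show ?thesis using True sum_if_sub[OF assms] by simp
    qed simp
    done
  also have "\<dots> = qf J A x" unfolding qf_def
    by (simp add: sum_if_sub[OF assms])
  finally show ?thesis .
qed

lemma psdI_sub: "finite I \<Longrightarrow> J \<subseteq> I \<Longrightarrow> psdI I A \<Longrightarrow> psdI J A"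
  unfolding psdI_def using qf_restrict by (metis subsetD)

lemma qf_drop:
  assumes "finite I" "m \<in> I" "\<And>i. i \<in> I \<Longrightarrow> A i m = 0" "\<And>i. i \<in> I \<Longrightarrow> A m i = 0"
  shows "qf I A x = qf (I - {m}) A x"
proof -
  have "qf I A x = (\<Sum>i\<in>I. \<Sum>j\<in>I - {m}. x i * A i j * x j)"
    unfolding qf_def
    by (rule sum.cong[OF refl], subst sum.remove[OF assms(1,2)], simp add: assms(3))
  also have "\<dots> = qf (I - {m}) A x"
    unfolding qf_def by (subst sum.remove[OF assms(1,2)], simp add: assms(4))
  finally show ?thesis .
qed

lemma qf_two:
  assumes "finite I" "p \<in> I" "q \<in> I" "p \<noteq> q"
  shows "qf I A (\<lambda>k. if k = p then s else if k = q then t else 0)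
     = s * s * A p p + s * t * A p q + t * s * A q p + t * t * A q q"
proof -
  have "qf I A (\<lambda>k. if k = p then s else if k = q then t else 0) =
        qf I A (\<lambda>k. if k \<in> {p,q} then (if k = p then s else t) else 0)"
    unfolding qf_def by (rule sum.cong[OF refl])+ auto
  also have "\<dots> = qf {p,q} A (\<lambda>k. if k = p then s else t)"
    using qf_restrict[OF assms(1), of "{p,q}"] assms by simp
  also have "\<dots> = s * s * A p p + s * t * A p q + t * s * A q p + t * t * A q q"
    using assms(4) by (simp add: qf_def)
  finally show ?thesis .
qed

lemma qf_one:
  assumes "finite I" "p \<in> I"
  shows "qf I A (\<lambda>k. if k = p then 1 else 0) = A p p"
proof -
  have "qf I A (\<lambda>k. if k = p then 1 else 0) = qf I A (\<lambda>k. if k \<in> {p} then 1 else 0)"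
    unfolding qf_def by simp
  also have "\<dots> = A p p" using qf_restrict[OF assms(1), of "{p}" A "\<lambda>_. 1"] assms by (simp add: qf_def)
  finally show ?thesis .
qed

lemma psd_diag: "finite I \<Longrightarrow> psdI I A \<Longrightarrow> p \<in> I \<Longrightarrow> A p p \<ge> 0"
  using qf_one unfolding psdI_def by metis

lemma psd_2x2:
  assumes "finite I" "psdI I A" "p \<in> I" "q \<in> I" "p \<noteq> q"
  shows "(A p q)^2 \<le> A p p * A q q"
proof -
  have sym: "A q p = A p q" using assms unfolding psdI_def by auto
  have Q: "\<And>s. 0 \<le> s * s * A p p + 2 * s * A p q + A q q"
  proof -
    fix s
    have "0 \<le> qf I A (\<lambda>k. if k = p then s else if k = q then 1 else 0)"
      using assms(2) unfolding psdI_def by blast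
    then show "0 \<le> s * s * A p p + 2 * s * A p q + A q q"
      using qf_two[OF assms(1,3,4,5)] sym by (simp add: algebra_simps)
  qed
  have pp: "A p p \<ge> 0" using psd_diag assms by blast
  show ?thesis
  proof (cases "A p p = 0")
    case True
    show ?thesis
    proof (rule ccontr)
      assume "\<not> ?thesis"
      then have ne: "A p q \<noteq> 0" using True by simp
      have "0 \<le> (-(A q q + 1)/(2*A p q))*(-(A q q + 1)/(2*A p q))*A p p + 2*(-(A q q + 1)/(2*A p q))*A p q + A q q"
        by (rule Q)
      then show False using True ne by (simp add: field_simps)
    qed
  next
    case False
    then have pos: "A p p > 0" using pp by simp
    have "0 \<le> (-A p q/A p p)*(-A p q/A p p)*A p p + 2*(-A p q/A p p)*A p q + A q q"
      by (rule Q)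
    then have "0 \<le> A q q - (A p q)^2 / A p p" using pos by (simp add: field_simps power2_eq_square)
    then show ?thesis using pos by (simp add: field_simps)
  qed
qed



lemma two_by_two:
  fixes a b c u v :: real
  assumes "a \<ge> 0" "c \<ge> 0" "b^2 \<le> a * c"
  shows "0 \<le> a * u^2 + 2 * u * b * v + c * v^2"
proof (cases "a = 0")
  case True
  then have "b = 0" using assms by simp
  then show ?thesis using True assms by simp
next
  case False
  then have ap: "a > 0" using assms by simp
  have "a * (a * u^2 + 2 * u * b * v + c * v^2) = (a * u + b * v)^2 + (a * c - b^2) * v^2"
    by (simp add: power2_eq_square algebra_simps)
  also have "\<dots> \<ge> 0" using assms by simp
  finally show ?thesis using ap by (simp add: zero_le_mult_iff)
qed

lemma sum_if_const: "finite I \<Longrightarrow> (\<Sum>j\<in>I. if P j then k else 0) = real (card {j\<in>I. P j}) * (k::real)"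
  by (simp add: sum.inter_filter[symmetric])

lemma psd_sparse:
  fixes B :: "nat \<Rightarrow> nat \<Rightarrow> real"
  assumes fin: "finite I"
    and sym: "\<forall>i\<in>I. \<forall>j\<in>I. B i j = B j i"
    and diag: "\<forall>i\<in>I. B i i \<ge> 0"
    and cs: "\<forall>i\<in>I. \<forall>j\<in>I. i \<noteq> j \<longrightarrow> (B i j)^2 \<le> B i i * B j j"
    and uniq: "\<forall>i\<in>I. \<forall>j\<in>I. \<forall>k\<in>I. j \<noteq> i \<longrightarrow> k \<noteq> i \<longrightarrow> B i j \<noteq> 0 \<longrightarrow> B i k \<noteq> 0 \<longrightarrow> j = k"
  shows "qf I B x \<ge> 0"
proof -
  define c where "c i = B i i * (x i)^2" for i
  define N where "N i j = (i \<noteq> j \<and> B i j \<noteq> 0)" for i j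
  have cnn: "c i \<ge> 0" if "i \<in> I" for i using diag that by (simp add: c_def)
  have Nsym: "N i j = N j i" if "i \<in> I" "j \<in> I" for i j using sym that by (auto simp: N_def)
  have deg: "card {j\<in>I. N i j} \<le> 1" if "i \<in> I" for i
  proof -
    have "finite {j\<in>I. N i j}" using fin by simp
    moreover have "\<forall>a\<in>{j\<in>I. N i j}. \<forall>b\<in>{j\<in>I. N i j}. a = b"
      using uniq that by (auto simp: N_def)
    ultimately have "card {j\<in>I. N i j} \<le> Suc 0" by (subst card_le_Suc0_iff_eq) auto
    then show ?thesis by simp
  qed
  define L where "L i j = (if i = j then c i else 0) - (if N i j then c i / 2 else 0) - (if N i j then c j / 2 else 0)" for i j
  have low: "x i * B i j * x j \<ge> L i j" if "i \<in> I" "j \<in> I" for i j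
  proof (cases "i = j")
    case True then show ?thesis by (simp add: L_def N_def c_def power2_eq_square mult_ac)
  next
    case False
    show ?thesis
    proof (cases "B i j = 0")
      case True then show ?thesis using False by (simp add: L_def N_def)
    next
      case nz: False
      have "0 \<le> B i i * (x i)^2 + 2 * (x i) * B i j * (x j) + B j j * (x j)^2"
        using two_by_two[of "B i i" "B j j" "B i j" "x i" "x j"] diag cs that False by auto
      then show ?thesis using False nz by (simp add: L_def N_def c_def field_simps)
    qed
  qed
  have "qf I B x \<ge> (\<Sum>i\<in>I. \<Sum>j\<in>I. L i j)"
    unfolding qf_def by (intro sum_mono) (simp add: low)
  also have "(\<Sum>i\<in>I. \<Sum>j\<in>I. L i j) = (\<Sum>i\<in>I. c i) - (\<Sum>i\<in>I. c i / 2 * real (card {j\<in>I. N i j}))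
       - (\<Sum>j\<in>I. c j / 2 * real (card {i\<in>I. N i j}))"
  proof -
    have "(\<Sum>i\<in>I. \<Sum>j\<in>I. L i j) = (\<Sum>i\<in>I. \<Sum>j\<in>I. (if i = j then c i else 0))
        - (\<Sum>i\<in>I. \<Sum>j\<in>I. (if N i j then c i / 2 else 0)) - (\<Sum>i\<in>I. \<Sum>j\<in>I. (if N i j then c j / 2 else 0))"
      unfolding L_def by (simp add: sum_subtractf)
    also have "(\<Sum>i\<in>I. \<Sum>j\<in>I. (if N i j then c j / 2 else 0)) = (\<Sum>j\<in>I. \<Sum>i\<in>I. (if N i j then c j / 2 else 0))"
      by (rule sum.swap)
    finally show ?thesis using fin by (simp add: sum_if_const mult.commute)
  qed
  also have "\<dots> \<ge> (\<Sum>i\<in>I. c i) - (\<Sum>i\<in>I. c i / 2) - (\<Sum>j\<in>I. c j / 2)"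
  proof -
    have a: "(\<Sum>i\<in>I. c i / 2 * real (card {j\<in>I. N i j})) \<le> (\<Sum>i\<in>I. c i / 2)"
    proof (intro sum_mono)
      fix i assume i: "i \<in> I"
      have "c i / 2 * real (card {j\<in>I. N i j}) \<le> c i / 2 * 1"
        using deg[OF i] cnn[OF i] by (intro mult_left_mono) auto
      then show "c i / 2 * real (card {j\<in>I. N i j}) \<le> c i / 2" by simp
    qed
    have b: "(\<Sum>j\<in>I. c j / 2 * real (card {i\<in>I. N i j})) \<le> (\<Sum>j\<in>I. c j / 2)"
    proof (intro sum_mono)
      fix j assume j: "j \<in> I"
      have "{i\<in>I. N i j} = {i\<in>I. N j i}" using Nsym j by auto
      then have "c j / 2 * real (card {i\<in>I. N i j}) \<le> c j / 2 * 1"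
        using deg[OF j] cnn[OF j] by (intro mult_left_mono) auto
      then show "c j / 2 * real (card {i\<in>I. N i j}) \<le> c j / 2" by simp
    qed
    show ?thesis using a b by linarith
  qed
  also have "(\<Sum>i\<in>I. c i) - (\<Sum>i\<in>I. c i / 2) - (\<Sum>j\<in>I. c j / 2) = 0"
    by (simp add: sum_divide_distrib[symmetric])
  finally show ?thesis by simp
qed

lemma qf_rank1: "qf I (\<lambda>i j. u i * u j * c) x = c * (\<Sum>i\<in>I. x i * u i)^2"
  unfolding qf_def by (simp add: power2_eq_square sum_product sum_distrib_left mult_ac)

lemma qf_update:
  assumes "finite I" "m \<in> I"
  shows "qf I A (\<lambda>k. x k + (if k = m then s else 0)) =
    qf I A x + s * (\<Sum>j\<in>I. A m j * x j) + s * (\<Sum>i\<in>I. x i * A i m) + s * s * A m m"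
proof -
  define d where "d k = (if k = m then s else 0)" for k
  have e: "(x i + d i) * A i j * (x j + d j) = x i * A i j * x j + d i * (A i j * x j) + (x i * A i j) * d j + d i * A i j * d j" for i j
    by (simp add: algebra_simps)
  have "qf I A (\<lambda>k. x k + d k) = qf I A x + (\<Sum>i\<in>I. \<Sum>j\<in>I. d i * (A i j * x j)) + (\<Sum>i\<in>I. \<Sum>j\<in>I. (x i * A i j) * d j)
      + (\<Sum>i\<in>I. \<Sum>j\<in>I. d i * A i j * d j)"
    unfolding qf_def e by (simp add: sum.distrib)
  also have "(\<Sum>i\<in>I. \<Sum>j\<in>I. d i * (A i j * x j)) = (\<Sum>i\<in>I. if i = m then s * (\<Sum>j\<in>I. A m j * x j) else 0)"
    by (rule sum.cong) (auto simp: d_def sum_distrib_left[symmetric])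
  also have "\<dots> = s * (\<Sum>j\<in>I. A m j * x j)" using assms by (simp add: sum.delta)
  also have "(\<Sum>i\<in>I. \<Sum>j\<in>I. (x i * A i j) * d j) = (\<Sum>i\<in>I. s * (x i * A i m))"
  proof (rule sum.cong[OF refl])
    fix i assume "i \<in> I"
    have "(\<Sum>j\<in>I. (x i * A i j) * d j) = (\<Sum>j\<in>I. if j = m then s * (x i * A i m) else 0)"
      by (rule sum.cong) (auto simp: d_def)
    then show "(\<Sum>j\<in>I. (x i * A i j) * d j) = s * (x i * A i m)" using assms by (simp add: sum.delta)
  qed
  also have "\<dots> = s * (\<Sum>i\<in>I. x i * A i m)" by (simp add: sum_distrib_left)
  also have "(\<Sum>i\<in>I. \<Sum>j\<in>I. d i * A i j * d j) = (\<Sum>i\<in>I. if i = m then s * s * A m m else 0)"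
  proof (rule sum.cong[OF refl])
    fix i assume "i \<in> I"
    have "(\<Sum>j\<in>I. d i * A i j * d j) = (\<Sum>j\<in>I. if j = m then d i * A i m * s else 0)"
      by (rule sum.cong) (auto simp: d_def)
    then show "(\<Sum>j\<in>I. d i * A i j * d j) = (if i = m then s * s * A m m else 0)" using assms by (simp add: sum.delta d_def)
  qed
  also have "\<dots> = s * s * A m m" using assms by (simp add: sum.delta)
  finally show ?thesis by (simp add: d_def)
qed



lemma qf_lin: "qf I (\<lambda>i j. t * A i j + s * B i j) x = t * qf I A x + s * qf I B x"
  unfolding qf_def by (simp add: sum.distrib sum_distrib_left algebra_simps)

lemma qf_diff: "qf I (\<lambda>i j. A i j - B i j) x = qf I A x - qf I B x"
  unfolding qf_def by (simp add: sum_subtractf algebra_simps)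

lemma qf_add: "qf I (\<lambda>i j. A i j + B i j) x = qf I A x + qf I B x"
  unfolding qf_def by (simp add: sum.distrib algebra_simps)

lemma psd_zero_row:
  assumes "finite I" "psdI I A" "m \<in> I" "A m m = 0" "i \<in> I"
  shows "A i m = 0" "A m i = 0"
proof -
  have "A i m = 0"
  proof (cases "i = m")
    case False
    have "(A i m)^2 \<le> A i i * A m m" using psd_2x2[OF assms(1,2,5,3) False] .
    then show ?thesis using assms(4) by simp
  qed (use assms in simp)
  then show "A i m = 0" "A m i = 0" using assms unfolding psdI_def by auto
qed

lemma schur_compl:
  assumes fin: "finite I" and m: "m \<in> I" and P: "psdI I A" and a: "A m m > 0"
  shows "psdI I (\<lambda>i j. A i j - A i m * A j m / A m m)"
proof -
  have sym: "\<forall>i\<in>I. \<forall>j\<in>I. A i j = A j i" using P unfolding psdI_def by auto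
  show ?thesis unfolding psdI_def
  proof (intro conjI ballI allI)
    fix i j assume "i \<in> I" "j \<in> I"
    then show "A i j - A i m * A j m / A m m = A j i - A j m * A i m / A m m" using sym by (simp add: mult.commute)
  next
    fix x
    define w where "w = (\<Sum>j\<in>I. A m j * x j)"
    have w2: "(\<Sum>i\<in>I. x i * A i m) = w" unfolding w_def
      using sym m by (intro sum.cong) (auto simp: mult.commute)
    have R: "qf I (\<lambda>i j. A i m * A j m / A m m) x = w^2 / A m m"
      using qf_rank1[of I "\<lambda>i. A i m" "1 / A m m" x] w2 by (simp add: field_simps)
    have "0 \<le> qf I A (\<lambda>k. x k + (if k = m then - w / A m m else 0))" using P unfolding psdI_def by blast
    also have "\<dots> = qf I A x - w^2 / A m m"
    proof -
      have "qf I A (\<lambda>k. x k + (if k = m then - w / A m m else 0)) = qf I A x + (- w / A m m) * w + (- w / A m m) * w + (- w / A m m) * (- w / A m m) * A m m"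
        using qf_update[OF fin m, of A x "- w / A m m"] w2 unfolding w_def[symmetric] by simp
      also have "\<dots> = qf I A x - w^2 / A m m" using a by (simp add: field_simps power2_eq_square)
      finally show ?thesis .
    qed
    finally show "0 \<le> qf I (\<lambda>i j. A i j - A i m * A j m / A m m) x"
      using R qf_diff[of I A "\<lambda>i j. A i m * A j m / A m m" x] by simp
  qed
qed

lemma schur_product:
  assumes "finite I" "psdI I B" "psdI I D"
  shows "psdI I (\<lambda>i j. B i j * D i j)"
  using assms
proof (induction I arbitrary: B D rule: finite_psubset_induct)
  case (psubset I)
  have symB: "\<forall>i\<in>I. \<forall>j\<in>I. B i j = B j i" and symD: "\<forall>i\<in>I. \<forall>j\<in>I. D i j = D j i"
    using psubset.prems unfolding psdI_def by auto
  show ?case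
  proof (cases "I = {}")
    case True then show ?thesis by (simp add: psdI_def qf_def)
  next
    case False
    then obtain m where m: "m \<in> I" by blast
    have sub: "I - {m} \<subset> I" using m by blast
    have fin: "finite I" by fact
    have symP: "\<forall>i\<in>I. \<forall>j\<in>I. B i j * D i j = B j i * D j i" using symB symD by simp
    have Dmm: "D m m \<ge> 0" using psd_diag[OF fin psubset.prems(2) m] .
    show ?thesis unfolding psdI_def
    proof (intro conjI symP allI)
      fix x
      show "0 \<le> qf I (\<lambda>i j. B i j * D i j) x"
      proof (cases "D m m = 0")
        case True
        have z1: "B i m * D i m = 0" "B m i * D m i = 0" if "i \<in> I" for i
          using psd_zero_row[OF fin psubset.prems(2) m True that] by auto
        have "qf I (\<lambda>i j. B i j * D i j) x = qf (I - {m}) (\<lambda>i j. B i j * D i j) x"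
          by (rule qf_drop[OF fin m]) (auto simp: z1)
        also have "\<dots> \<ge> 0"
        proof -
          have "psdI (I - {m}) B" "psdI (I - {m}) D"
            using psdI_sub[OF fin, of "I - {m}"] psubset.prems by auto
          then have "psdI (I - {m}) (\<lambda>i j. B i j * D i j)"
            using psubset.IH[OF sub] by simp
          then show ?thesis unfolding psdI_def by blast
        qed
        finally show ?thesis .
      next
        case False
        then have a: "D m m > 0" using Dmm by simp
        define D' where "D' i j = D i j - D i m * D j m / D m m" for i j
        have PD': "psdI I D'" unfolding D'_def by (rule schur_compl[OF fin m psubset.prems(2) a])
        have z1: "B i m * D' i m = 0" "B m i * D' m i = 0" if "i \<in> I" for i
          using a symD m that by (auto simp: D'_def)
        have "qf I (\<lambda>i j. B i j * D' i j) x = qf (I - {m}) (\<lambda>i j. B i j * D' i j) x"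
          by (rule qf_drop[OF fin m]) (auto simp: z1)
        also have "\<dots> \<ge> 0"
        proof -
          have "psdI (I - {m}) B" "psdI (I - {m}) D'"
            using psdI_sub[OF fin, of "I - {m}"] psubset.prems PD' by auto
          then have "psdI (I - {m}) (\<lambda>i j. B i j * D' i j)"
            using psubset.IH[OF sub] by simp
          then show ?thesis unfolding psdI_def by blast
        qed
        finally have q1: "qf I (\<lambda>i j. B i j * D' i j) x \<ge> 0" .
        have "qf I (\<lambda>i j. B i j * (D i m * D j m / D m m)) x = qf I B (\<lambda>i. x i * D i m) / D m m"
          unfolding qf_def by (simp add: sum_divide_distrib algebra_simps)
        also have "\<dots> \<ge> 0" using psubset.prems(1) a unfolding psdI_def by simp
        finally have q2: "qf I (\<lambda>i j. B i j * (D i m * D j m / D m m)) x \<ge> 0" .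
        have "qf I (\<lambda>i j. B i j * D i j) x = qf I (\<lambda>i j. B i j * D' i j + B i j * (D i m * D j m / D m m)) x"
          unfolding D'_def by (simp add: algebra_simps)
        also have "\<dots> = qf I (\<lambda>i j. B i j * D' i j) x + qf I (\<lambda>i j. B i j * (D i m * D j m / D m m)) x"
          by (rule qf_add)
        finally show ?thesis using q1 q2 by simp
      qed
    qed
  qed
qed



lemma powr_integral:
  fixes x y \<alpha> :: real
  assumes x: "x \<ge> 0" and y: "y \<ge> 0" and al: "\<alpha> \<ge> 1"
  shows "((\<lambda>t. \<alpha> * (x - y) * (t * x + (1 - t) * y) powr (\<alpha> - 1)) has_integral (x powr \<alpha> - y powr \<alpha>)) {0..1}"
proof (cases "x = 0 \<and> y = 0")
  case True then show ?thesis by simp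
next
  case False
  define f where "f t = (t * x + (1 - t) * y) powr \<alpha>" for t
  have c0: "t * x + (1 - t) * y \<ge> 0" if "t \<in> {0..1}" for t
    using that x y by simp
  have cpos: "t * x + (1 - t) * y > 0" if "t \<in> {0<..<1}" for t
  proof -
    have "t * x \<ge> 0" "(1 - t) * y \<ge> 0" using that x y by auto
    moreover have "t * x > 0 \<or> (1 - t) * y > 0" using that x y False by auto
    ultimately show ?thesis by linarith
  qed
  have "((\<lambda>t. \<alpha> * (t * x + (1 - t) * y) powr (\<alpha> - 1) * (x - y)) has_integral (f 1 - f 0)) {0..1}"
  proof (rule fundamental_theorem_of_calculus_interior)
    show "continuous_on {0..1} f" unfolding f_def
      by (rule continuous_on_powr') (use c0 al in \<open>auto intro!: continuous_intros\<close>)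
  next
    fix t :: real assume t: "t \<in> {0<..<1}"
    have d: "((\<lambda>t. t * x + (1 - t) * y) has_real_derivative (x - y)) (at t)"
      by (auto intro!: derivative_eq_intros)
    have "(f has_real_derivative \<alpha> * (t * x + (1 - t) * y) powr (\<alpha> - of_nat 1) * (x - y)) (at t)"
      unfolding f_def by (rule DERIV_fun_powr[OF d cpos[OF t]])
    then show "(f has_vector_derivative \<alpha> * (t * x + (1 - t) * y) powr (\<alpha> - 1) * (x - y)) (at t)"
      by (simp add: has_real_derivative_iff_has_vector_derivative)
  qed simp
  then show ?thesis by (simp add: f_def mult_ac)
qed

lemma fitzgerald_horn:
  assumes "finite I" "psdI I A" "\<forall>i\<in>I. \<forall>j\<in>I. A i j \<ge> 0" "\<alpha> \<ge> 0" "real (card I) \<le> \<alpha> + 2"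
  shows "psdI I (\<lambda>i j. A i j powr \<alpha>)"
  using assms
proof (induction I arbitrary: A \<alpha> rule: finite_psubset_induct)
  case (psubset I)
  have fin: "finite I" by fact
  have symA: "\<forall>i\<in>I. \<forall>j\<in>I. A i j = A j i" using psubset.prems unfolding psdI_def by auto
  have nn: "\<And>i j. i \<in> I \<Longrightarrow> j \<in> I \<Longrightarrow> A i j \<ge> 0" using psubset.prems by auto
  have al0: "\<alpha> \<ge> 0" by fact
  have symP: "\<forall>i\<in>I. \<forall>j\<in>I. A i j powr \<alpha> = A j i powr \<alpha>" using symA by simp
  show ?case
  proof (cases "card I \<le> 2")
    case True
    show ?thesis unfolding psdI_def
    proof (intro conjI symP allI)
      fix x
      show "0 \<le> qf I (\<lambda>i j. A i j powr \<alpha>) x"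
      proof (rule psd_sparse[OF fin symP])
        show "\<forall>i\<in>I. 0 \<le> A i i powr \<alpha>" by simp
        show "\<forall>i\<in>I. \<forall>j\<in>I. i \<noteq> j \<longrightarrow> (A i j powr \<alpha>)\<^sup>2 \<le> A i i powr \<alpha> * A j j powr \<alpha>"
        proof (intro ballI impI)
          fix i j assume ij: "i \<in> I" "j \<in> I" "i \<noteq> j"
          have "(A i j)^2 \<le> A i i * A j j" using psd_2x2[OF fin psubset.prems(1) ij] .
          then have "((A i j)^2) powr \<alpha> \<le> (A i i * A j j) powr \<alpha>"
            using al0 by (intro powr_mono2) auto
          then show "(A i j powr \<alpha>)\<^sup>2 \<le> A i i powr \<alpha> * A j j powr \<alpha>"
            using nn ij by (simp add: power2_eq_square powr_mult)
        qed
        show "\<forall>i\<in>I. \<forall>j\<in>I. \<forall>k\<in>I. j \<noteq> i \<longrightarrow> k \<noteq> i \<longrightarrow> A i j powr \<alpha> \<noteq> 0 \<longrightarrow> A i k powr \<alpha> \<noteq> 0 \<longrightarrow> j = k"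
        proof (intro ballI impI; rule ccontr)
          fix i j k assume "i \<in> I" "j \<in> I" "k \<in> I" "j \<noteq> i" "k \<noteq> i" "j \<noteq> k"
          then have "card {i, j, k} = 3" "{i,j,k} \<subseteq> I" by auto
          then have "3 \<le> card I" using card_mono[OF fin] by metis
          then show False using True by simp
        qed
      qed
    qed
  next
    case False
    then have c3: "card I \<ge> 3" by simp
    then have al1: "\<alpha> \<ge> 1" using psubset.prems by simp
    have "I \<noteq> {}" using c3 by auto
    then obtain m where m: "m \<in> I" by blast
    have sub: "I - {m} \<subset> I" using m by blast
    have cI: "real (card (I - {m})) = real (card I) - 1" using m fin c3 by (simp add: of_nat_diff)
    have Amm: "A m m \<ge> 0" using psd_diag[OF fin psubset.prems(1) m] .
    show ?thesis unfolding psdI_def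
    proof (intro conjI symP allI)
      fix x
      show "0 \<le> qf I (\<lambda>i j. A i j powr \<alpha>) x"
      proof (cases "A m m = 0")
        case True
        have z1: "A i m powr \<alpha> = 0" "A m i powr \<alpha> = 0" if "i \<in> I" for i
          using psd_zero_row[OF fin psubset.prems(1) m True that] by auto
        have "qf I (\<lambda>i j. A i j powr \<alpha>) x = qf (I - {m}) (\<lambda>i j. A i j powr \<alpha>) x"
          by (rule qf_drop[OF fin m]) (auto simp: z1)
        also have "\<dots> \<ge> 0"
        proof -
          have "psdI (I - {m}) A" using psdI_sub[OF fin, of "I - {m}"] psubset.prems by auto
          then have "psdI (I - {m}) (\<lambda>i j. A i j powr \<alpha>)"
            using psubset.IH[OF sub, of A \<alpha>] psubset.prems cI by auto
          then show ?thesis unfolding psdI_def by blast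
        qed
        finally show ?thesis .
      next
        case False
        then have a: "A m m > 0" using Amm by simp
        define R where "R i j = A i m * A j m / A m m" for i j
        define B where "B i j = A i j - R i j" for i j
        define C where "C t i j = t * A i j + (1 - t) * R i j" for t i j
        have Rnn: "R i j \<ge> 0" if "i \<in> I" "j \<in> I" for i j
          using nn[OF that(1) m] nn[OF that(2) m] a by (simp add: R_def)
        have PB: "psdI I B" unfolding B_def R_def by (rule schur_compl[OF fin m psubset.prems(1) a])
        have Bz: "B i m = 0" "B m i = 0" if "i \<in> I" for i
          using a symA m that by (auto simp: B_def R_def)
        have qR: "qf I R y \<ge> 0" for y
        proof -
          have "qf I R y = qf I (\<lambda>i j. A i m * A j m * (1 / A m m)) y" by (rule qf_cong) (simp add: R_def)
          also have "\<dots> = (1 / A m m) * (\<Sum>i\<in>I. y i * A i m)^2" by (rule qf_rank1)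
          also have "\<dots> \<ge> 0" using a by simp
          finally show ?thesis .
        qed
        have PC: "psdI (I - {m}) (\<lambda>i j. C t i j powr (\<alpha> - 1))" if t: "t \<in> {0..1}" for t
        proof -
          have "psdI I (C t)" unfolding psdI_def
          proof (intro conjI ballI allI)
            fix i j assume "i \<in> I" "j \<in> I"
            then show "C t i j = C t j i" using symA by (simp add: C_def R_def mult.commute)
          next
            fix y
            have "qf I (C t) y = t * qf I A y + (1 - t) * qf I R y"
              unfolding C_def by (rule qf_lin)
            moreover have "qf I A y \<ge> 0" using psubset.prems unfolding psdI_def by blast
            ultimately show "qf I (C t) y \<ge> 0" using qR[of y] t by simp
          qed
          then have "psdI (I - {m}) (C t)" using psdI_sub[OF fin, of "I - {m}"] by auto
          moreover have "\<forall>i\<in>I - {m}. \<forall>j\<in>I - {m}. C t i j \<ge> 0"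
            using nn Rnn t by (simp add: C_def)
          ultimately show ?thesis
            using psubset.IH[OF sub, of "C t" "\<alpha> - 1"] al1 cI psubset.prems by auto
        qed
        have qM: "qf I (\<lambda>i j. B i j * C t i j powr (\<alpha> - 1)) x \<ge> 0" if t: "t \<in> {0..1}" for t
        proof -
          have "qf I (\<lambda>i j. B i j * C t i j powr (\<alpha> - 1)) x = qf (I - {m}) (\<lambda>i j. B i j * C t i j powr (\<alpha> - 1)) x"
            by (rule qf_drop[OF fin m]) (auto simp: Bz)
          also have "\<dots> \<ge> 0"
          proof -
            have "psdI (I - {m}) B" using psdI_sub[OF fin, of "I - {m}"] PB by auto
            then have "psdI (I - {m}) (\<lambda>i j. B i j * C t i j powr (\<alpha> - 1))"
              using schur_product[OF _ _ PC[OF t]] fin by auto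
            then show ?thesis unfolding psdI_def by blast
          qed
          finally show ?thesis .
        qed
        have int: "((\<lambda>t. \<Sum>i\<in>I. \<Sum>j\<in>I. x i * x j * (\<alpha> * (A i j - R i j) * (t * A i j + (1 - t) * R i j) powr (\<alpha> - 1)))
             has_integral (\<Sum>i\<in>I. \<Sum>j\<in>I. x i * x j * (A i j powr \<alpha> - R i j powr \<alpha>))) {0..1}"
          by (intro has_integral_sum fin has_integral_mult_right powr_integral nn Rnn al1)
        have "0 \<le> (\<Sum>i\<in>I. \<Sum>j\<in>I. x i * x j * (A i j powr \<alpha> - R i j powr \<alpha>))"
        proof (rule has_integral_nonneg[OF int])
          fix t :: real assume t: "t \<in> {0..1}"
          have "(\<Sum>i\<in>I. \<Sum>j\<in>I. x i * x j * (\<alpha> * (A i j - R i j) * (t * A i j + (1 - t) * R i j) powr (\<alpha> - 1)))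
              = \<alpha> * qf I (\<lambda>i j. B i j * C t i j powr (\<alpha> - 1)) x"
            unfolding qf_def B_def C_def by (simp add: sum_distrib_left mult_ac)
          also have "\<dots> \<ge> 0" using qM[OF t] al1 by simp
          finally show "0 \<le> (\<Sum>i\<in>I. \<Sum>j\<in>I. x i * x j * (\<alpha> * (A i j - R i j) * (t * A i j + (1 - t) * R i j) powr (\<alpha> - 1)))" .
        qed
        also have "(\<Sum>i\<in>I. \<Sum>j\<in>I. x i * x j * (A i j powr \<alpha> - R i j powr \<alpha>)) =
            qf I (\<lambda>i j. A i j powr \<alpha>) x - qf I (\<lambda>i j. R i j powr \<alpha>) x"
          unfolding qf_def by (simp add: sum_subtractf algebra_simps)
        finally have d: "qf I (\<lambda>i j. R i j powr \<alpha>) x \<le> qf I (\<lambda>i j. A i j powr \<alpha>) x" by simp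
        have "qf I (\<lambda>i j. R i j powr \<alpha>) x = qf I (\<lambda>i j. A i m powr \<alpha> * A j m powr \<alpha> * (1 / A m m powr \<alpha>)) x"
          by (rule qf_cong) (simp add: R_def powr_divide powr_mult nn m)
        also have "\<dots> = (1 / A m m powr \<alpha>) * (\<Sum>i\<in>I. x i * A i m powr \<alpha>)^2" by (rule qf_rank1)
        also have "\<dots> \<ge> 0" using a by simp
        finally show ?thesis using d by linarith
      qed
    qed
  qed
qed



lemma qf_support:
  assumes "finite I" "J \<subseteq> I" "\<And>p q. A p q \<noteq> 0 \<Longrightarrow> p \<in> J \<and> q \<in> J"
  shows "qf I A x = qf J A x"
proof -
  have "qf I A x = (\<Sum>i\<in>I. \<Sum>j\<in>J. x i * A i j * x j)"
    unfolding qf_def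
  proof (rule sum.cong[OF refl])
    fix i assume "i \<in> I"
    show "(\<Sum>j\<in>I. x i * A i j * x j) = (\<Sum>j\<in>J. x i * A i j * x j)"
      by (rule sum.mono_neutral_right[OF assms(1,2)]) (use assms(3) in force)
  qed
  also have "\<dots> = qf J A x" unfolding qf_def
    by (rule sum.mono_neutral_right[OF assms(1,2)]) (use assms(3) in \<open>force intro: sum.neutral\<close>)
  finally show ?thesis .
qed

lemma hpow_eq: "A i j \<ge> 0 \<Longrightarrow> hpow \<alpha> A i j = A i j powr \<alpha>"
  by (simp add: hpow_def)

definition Pw :: "nat \<Rightarrow> (nat \<Rightarrow> nat \<Rightarrow> bool) \<Rightarrow> real \<Rightarrow> bool" where
  "Pw n E \<beta> \<longleftrightarrow> (\<forall>A. inPG n E {0..} A \<longrightarrow> inPG n E UNIV (hpow \<beta> A))"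

lemma HG_Pw: "HG n E = {\<alpha>. Pw n E \<alpha>}"
  by (simp add: HG_def Pw_def)

lemma CE_Pw: "CE_H n E = (LEAST \<alpha>::real. \<forall>\<beta>\<ge>\<alpha>. Pw n E \<beta>)"
  unfolding CE_H_def Pw_def by metis

lemma qf_hpow:
  assumes "inPG n E {0..} A"
  shows "qf {1..n} (hpow \<beta> A) x = qf {1..n} (\<lambda>i j. A i j powr \<beta>) x"
  using assms by (intro qf_cong) (simp add: inPG_def hpow_eq)

lemma inPG_hpow:
  assumes "inPG n E {0..} A" "\<And>x. qf {1..n} (\<lambda>i j. A i j powr \<beta>) x \<ge> 0"
  shows "inPG n E UNIV (hpow \<beta> A)"
  using assms qf_hpow[OF assms(1)]
  unfolding inPG_def psd_psdI psdI_def by (auto simp: hpow_def)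

lemma Pw_FH:
  assumes "\<beta> \<ge> 0" "real n \<le> \<beta> + 2"
  shows "Pw n E \<beta>"
  unfolding Pw_def
proof (intro allI impI)
  fix A assume A: "inPG n E {0..} A"
  have "psdI {1..n} (\<lambda>i j. A i j powr \<beta>)"
    using fitzgerald_horn[of "{1..n}" A \<beta>] A assms unfolding inPG_def psd_psdI by auto
  then show "inPG n E UNIV (hpow \<beta> A)" using inPG_hpow[OF A] unfolding psdI_def by blast
qed

lemma powr_cs:
  assumes "finite I" "psdI I A" "\<forall>i\<in>I. \<forall>j\<in>I. A i j \<ge> 0" "\<alpha> \<ge> 0" "i \<in> I" "j \<in> I" "i \<noteq> j"
  shows "(A i j powr \<alpha>)\<^sup>2 \<le> A i i powr \<alpha> * A j j powr \<alpha>"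
proof -
  have "(A i j)^2 \<le> A i i * A j j" using psd_2x2[OF assms(1,2,5,6,7)] .
  then have "((A i j)^2) powr \<alpha> \<le> (A i i * A j j) powr \<alpha>"
    using assms by (intro powr_mono2) auto
  then show ?thesis using assms by (simp add: power2_eq_square powr_mult)
qed

lemma Pw_union:
  assumes g: "sgraph n E" and U: "union_of_K2 n E" and b: "\<beta> \<ge> 0"
  shows "Pw n E \<beta>"
  unfolding Pw_def
proof (intro allI impI)
  fix A assume A: "inPG n E {0..} A"
  have PA: "psdI {1..n} A" and nn: "\<forall>i\<in>{1..n}. \<forall>j\<in>{1..n}. A i j \<ge> 0"
    and pat: "\<forall>i\<in>{1..n}. \<forall>j\<in>{1..n}. i \<noteq> j \<and> \<not> E i j \<longrightarrow> A i j = 0"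
    using A unfolding inPG_def psd_psdI by auto
  have symA: "\<forall>i\<in>{1..n}. \<forall>j\<in>{1..n}. A i j = A j i" using PA unfolding psdI_def by auto
  have "qf {1..n} (\<lambda>i j. A i j powr \<beta>) x \<ge> 0" for x
  proof (rule psd_sparse)
    show "\<forall>i\<in>{1..n}. \<forall>j\<in>{1..n}. A i j powr \<beta> = A j i powr \<beta>" using symA by simp
    show "\<forall>i\<in>{1..n}. 0 \<le> A i i powr \<beta>" by simp
    show "\<forall>i\<in>{1..n}. \<forall>j\<in>{1..n}. i \<noteq> j \<longrightarrow> (A i j powr \<beta>)\<^sup>2 \<le> A i i powr \<beta> * A j j powr \<beta>"
      using powr_cs[OF _ PA nn b] by auto
    show "\<forall>i\<in>{1..n}. \<forall>j\<in>{1..n}. \<forall>k\<in>{1..n}. j \<noteq> i \<longrightarrow> k \<noteq> i \<longrightarrow> A i j powr \<beta> \<noteq> 0 \<longrightarrow> A i k powr \<beta> \<noteq> 0 \<longrightarrow> j = k"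
    proof (intro ballI impI)
      fix i j k assume ijk: "i \<in> {1..n}" "j \<in> {1..n}" "k \<in> {1..n}" "j \<noteq> i" "k \<noteq> i"
        and nz: "A i j powr \<beta> \<noteq> 0" "A i k powr \<beta> \<noteq> 0"
      have "E i j" using pat[rule_format, OF ijk(1) ijk(2)] ijk(4) nz(1) by (cases "E i j") auto
      moreover have "E i k" using pat[rule_format, OF ijk(1) ijk(3)] ijk(5) nz(2) by (cases "E i k") auto
      ultimately have "j \<in> {u\<in>{1..n}. E i u}" "k \<in> {u\<in>{1..n}. E i u}" using ijk by auto
      moreover have "card {u\<in>{1..n}. E i u} \<le> Suc 0" using U ijk unfolding union_of_K2_def by auto
      ultimately show "j = k" by (subst (asm) card_le_Suc0_iff_eq) auto
    qed
  qed simp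
  then show "inPG n E UNIV (hpow \<beta> A)" by (rule inPG_hpow[OF A])
qed



lemma sg: assumes "sgraph n E" "E i j" shows "i \<in> {1..n}" "j \<in> {1..n}" "i \<noteq> j" "E j i"
  using assms unfolding sgraph_def by blast+

lemma Pw_edge_neg:
  assumes g: "sgraph n E" and e: "E i j" and al: "\<alpha> < 0"
  shows "\<not> Pw n E \<alpha>"
proof
  assume P: "Pw n E \<alpha>"
  note s = sg[OF g e]
  define A :: "nat \<Rightarrow> nat \<Rightarrow> real" where
    "A p q = (if p \<in> {i,j} \<and> q \<in> {i,j} then (if p = q then 2 else 1) else 0)" for p q
  have sup: "p \<in> {i,j} \<and> q \<in> {i,j}" if "A p q \<noteq> 0" for p q using that by (auto simp: A_def split: if_splits)
  have Jsub: "{i,j} \<subseteq> {1..n}" using s by auto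
  have "inPG n E {0..} A" unfolding inPG_def psd_psdI psdI_def
  proof (intro conjI ballI allI)
    fix x
    have "qf {1..n} A x = qf {i,j} A x" by (rule qf_support[OF _ Jsub sup]) auto
    also have "\<dots> = x i * 2 * x i + x i * 1 * x j + x j * 1 * x i + x j * 2 * x j"
      using s(3) by (simp add: qf_def A_def)
    also have "\<dots> = (x i)^2 + (x j)^2 + (x i + x j)^2" by (simp add: power2_eq_square algebra_simps)
    also have "\<dots> \<ge> 0" by simp
    finally show "qf {1..n} A x \<ge> 0" .
  qed (use s e in \<open>auto simp: A_def\<close>)
  then have "inPG n E UNIV (hpow \<alpha> A)" using P unfolding Pw_def by blast
  then have "0 \<le> qf {1..n} (hpow \<alpha> A) (\<lambda>k. if k = i then 1 else if k = j then -1 else 0)"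
    unfolding inPG_def psd_psdI psdI_def by blast
  also have "\<dots> = 2 * 2 powr \<alpha> - 2"
    using qf_two[of "{1..n}" i j "hpow \<alpha> A" 1 "-1"] s by (simp add: hpow_def A_def)
  finally have "1 \<le> 2 powr \<alpha>" by simp
  moreover have "2 powr \<alpha> < 2 powr (0::real)" using al by (intro powr_less_mono) auto
  ultimately show False by simp
qed

lemma qf3:
  assumes "u \<noteq> v" "v \<noteq> w" "u \<noteq> w"
  shows "qf {u,v,w} M y = y u * M u u * y u + y u * M u v * y v + y u * M u w * y w
     + (y v * M v u * y u + y v * M v v * y v + y v * M v w * y w)
     + (y w * M w u * y u + y w * M w v * y v + y w * M w w * y w)"
  using assms by (simp add: qf_def)

lemma Pw_path_neg:
  assumes uvw: "u \<in> {1..n}" "v \<in> {1..n}" "w \<in> {1..n}" "u \<noteq> v" "v \<noteq> w" "u \<noteq> w"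
    and e: "E v u" "E u v" "E v w" "E w v" and al: "\<alpha> < 1"
  shows "\<not> Pw n E \<alpha>"
proof
  assume P: "Pw n E \<alpha>"
  define e1 :: "nat \<Rightarrow> real" where "e1 k = (if k = u \<or> k = v then 1 else 0)" for k
  define e2 :: "nat \<Rightarrow> real" where "e2 k = (if k = v \<or> k = w then 1 else 0)" for k
  define A :: "nat \<Rightarrow> nat \<Rightarrow> real" where "A p q = e1 p * e1 q + e2 p * e2 q" for p q
  have sup: "p \<in> {u,v,w} \<and> q \<in> {u,v,w}" if "A p q \<noteq> 0" for p q
    using that by (auto simp: A_def e1_def e2_def split: if_splits)
  have sup2: "p \<in> {u,v,w} \<and> q \<in> {u,v,w}" if "hpow \<alpha> A p q \<noteq> 0" for p q
    using that sup by (auto simp: hpow_def split: if_splits)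
  have Jsub: "{u,v,w} \<subseteq> {1..n}" using uvw by auto
  have symA: "A p q = A q p" for p q unfolding A_def by simp
  have nnA: "A p q \<ge> 0" for p q unfolding A_def e1_def e2_def by simp
  have patA: "A p q = 0" if "p \<noteq> q" "\<not> E p q" for p q
    using that e uvw unfolding A_def e1_def e2_def by auto
  have "inPG n E {0..} A" unfolding inPG_def psd_psdI psdI_def
  proof (intro conjI ballI allI)
    fix x
    have "qf {1..n} A x = qf {1..n} (\<lambda>p q. e1 p * e1 q * 1) x + qf {1..n} (\<lambda>p q. e2 p * e2 q * 1) x"
      unfolding A_def by (simp add: qf_add[symmetric])
    also have "\<dots> \<ge> 0" unfolding qf_rank1 by simp
    finally show "qf {1..n} A x \<ge> 0" .
  qed (use symA nnA patA in auto)
  then have "inPG n E UNIV (hpow \<alpha> A)" using P unfolding Pw_def by blast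
  define y :: "nat \<Rightarrow> real" where "y k = (if k = v then -1 else if k = u then 1 else if k = w then 1 else 0)" for k
  have "0 \<le> qf {1..n} (hpow \<alpha> A) y"
    using \<open>inPG n E UNIV (hpow \<alpha> A)\<close> unfolding inPG_def psd_psdI psdI_def by blast
  also have "\<dots> = qf {u,v,w} (hpow \<alpha> A) y"
    by (rule qf_support[OF _ Jsub sup2]) auto
  also have "\<dots> = 2 powr \<alpha> - 2"
  proof -
    have yv: "y u = 1" "y v = -1" "y w = 1" using uvw by (auto simp: y_def)
    have hv: "hpow \<alpha> A v v = 2 powr \<alpha>" "hpow \<alpha> A u u = 1" "hpow \<alpha> A w w = 1"
      "hpow \<alpha> A u v = 1" "hpow \<alpha> A v u = 1" "hpow \<alpha> A w v = 1" "hpow \<alpha> A v w = 1"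
      "hpow \<alpha> A u w = 0" "hpow \<alpha> A w u = 0"
      using uvw by (auto simp: hpow_def A_def e1_def e2_def)
    show ?thesis unfolding qf3[OF uvw(4-6)] yv hv by simp
  qed
  finally have "2 \<le> 2 powr \<alpha>" by simp
  moreover have "2 powr \<alpha> < 2 powr (1::real)" using al by (intro powr_less_mono) auto
  ultimately show False by simp
qed

lemma tendsto_powr_exp: "((\<lambda>b. (a::real) powr b) \<longlongrightarrow> a powr c) (at c within S)"
proof (cases "a = 0")
  case True then show ?thesis by simp
next
  case False then show ?thesis by (intro tendsto_powr tendsto_const tendsto_ident_at) auto
qed

lemma Pw_closed:
  assumes "\<forall>\<beta>>c. Pw n E \<beta>"
  shows "Pw n E c"
  unfolding Pw_def
proof (intro allI impI)
  fix A assume A: "inPG n E {0..} A"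
  show "inPG n E UNIV (hpow c A)"
  proof (rule inPG_hpow[OF A])
    fix x
    define g where "g b = qf {1..n} (\<lambda>i j. A i j powr b) x" for b
    have t: "(g \<longlongrightarrow> g c) (at_right c)" unfolding g_def qf_def
      by (intro tendsto_sum tendsto_mult tendsto_const tendsto_powr_exp)
    have ev: "\<forall>\<^sub>F b in at_right c. 0 \<le> g b"
    proof (rule eventually_mono[OF eventually_at_right_less])
      fix b assume "c < b"
      then have "inPG n E UNIV (hpow b A)" using assms A unfolding Pw_def by blast
      then have "0 \<le> qf {1..n} (hpow b A) x" unfolding inPG_def psd_psdI psdI_def by blast
      then show "0 \<le> g b" using qf_hpow[OF A] by (simp add: g_def)
    qed
    have "0 \<le> g c" by (rule tendsto_lowerbound[OF t ev]) simp
    then show "0 \<le> qf {1..n} (\<lambda>i j. A i j powr c) x" by (simp add: g_def)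
  qed
qed



lemma not_union_path:
  assumes g: "sgraph n E" and nU: "\<not> union_of_K2 n E"
  obtains u v w where "u \<in> {1..n}" "v \<in> {1..n}" "w \<in> {1..n}" "u \<noteq> v" "v \<noteq> w" "u \<noteq> w"
    "E v u" "E u v" "E v w" "E w v"
proof -
  obtain v where v: "v \<in> {1..n}" and c: "\<not> card {u\<in>{1..n}. E v u} \<le> Suc 0"
    using nU unfolding union_of_K2_def by auto
  then obtain u w where "u \<in> {x\<in>{1..n}. E v x}" "w \<in> {x\<in>{1..n}. E v x}" "u \<noteq> w"
    by (subst (asm) card_le_Suc0_iff_eq) auto
  then show ?thesis using that g unfolding sgraph_def by blast
qed

lemma union_iff_sub3:
  assumes g: "sgraph n E"
  shows "union_of_K2 n E \<longleftrightarrow> \<not> has_connected_sub3 n E"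
proof
  assume U: "union_of_K2 n E"
  show "\<not> has_connected_sub3 n E"
  proof
    assume "has_connected_sub3 n E"
    then obtain S where S: "S \<subseteq> {1..n}" "card S = 3"
      and conn: "\<forall>x\<in>S. \<forall>y\<in>S. (\<lambda>u v. u \<in> S \<and> v \<in> S \<and> E u v)\<^sup>*\<^sup>* x y"
      unfolding has_connected_sub3_def by blast
    have "S \<noteq> {}" using S by auto
    then obtain a where a: "a \<in> S" by blast
    define T where "T = insert a {y\<in>{1..n}. E a y}"
    have reach: "y \<in> T" if "(\<lambda>u v. u \<in> S \<and> v \<in> S \<and> E u v)\<^sup>*\<^sup>* a y" for y
      using that
    proof (induction rule: rtranclp_induct)
      case base then show ?case by (simp add: T_def)
    next
      case (step y z)
      then have yS: "y \<in> S" and zS: "z \<in> S" and yz: "E y z" by auto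
      show ?case
      proof (cases "y = a")
        case True then show ?thesis using zS S yz by (auto simp: T_def)
      next
        case False
        then have ay: "E a y" "y \<in> {1..n}" using step.IH by (auto simp: T_def)
        then have ya: "E y a" using g unfolding sgraph_def by blast
        have "a \<in> {u\<in>{1..n}. E y u}" "z \<in> {u\<in>{1..n}. E y u}" using ya yz zS S a by auto
        moreover have "card {u\<in>{1..n}. E y u} \<le> Suc 0" using U ay unfolding union_of_K2_def by auto
        ultimately have "z = a" by (subst (asm) card_le_Suc0_iff_eq) auto
        then show ?thesis by (simp add: T_def)
      qed
    qed
    have "S \<subseteq> T" using reach conn a by blast
    moreover have "finite T" by (simp add: T_def)
    ultimately have "card S \<le> card T" by (rule card_mono[rotated])
    moreover have "card T \<le> 2"
    proof -
      have "card {y\<in>{1..n}. E a y} \<le> 1" using U a S unfolding union_of_K2_def by auto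
      then show ?thesis unfolding T_def using card_insert_le_m1 by (simp add: card_insert_if)
    qed
    ultimately show False using S by simp
  qed
next
  assume "\<not> has_connected_sub3 n E"
  show "union_of_K2 n E"
  proof (rule ccontr)
    assume "\<not> union_of_K2 n E"
    then obtain u v w where p: "u \<in> {1..n}" "v \<in> {1..n}" "w \<in> {1..n}" "u \<noteq> v" "v \<noteq> w" "u \<noteq> w"
      "E v u" "E u v" "E v w" "E w v" using not_union_path[OF g] by blast
    let ?S = "{u,v,w}"
    let ?R = "\<lambda>x y. x \<in> ?S \<and> y \<in> ?S \<and> E x y"
    have tov: "?R\<^sup>*\<^sup>* x v" if "x \<in> ?S" for x
    proof -
      have "x = u \<or> x = v \<or> x = w" using that by simp
      then show ?thesis
      proof (elim disjE)
        assume "x = u" then show ?thesis by (intro r_into_rtranclp) (simp add: p)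
      next
        assume "x = v" then show ?thesis by simp
      next
        assume "x = w" then show ?thesis by (intro r_into_rtranclp) (simp add: p)
      qed
    qed
    have fromv: "?R\<^sup>*\<^sup>* v y" if "y \<in> ?S" for y
    proof -
      have "y = u \<or> y = v \<or> y = w" using that by simp
      then show ?thesis
      proof (elim disjE)
        assume "y = u" then show ?thesis by (intro r_into_rtranclp) (simp add: p)
      next
        assume "y = v" then show ?thesis by simp
      next
        assume "y = w" then show ?thesis by (intro r_into_rtranclp) (simp add: p)
      qed
    qed
    have "has_connected_sub3 n E" unfolding has_connected_sub3_def
    proof (intro exI conjI ballI)
      show "?S \<subseteq> {1..n}" using p by auto
      show "card ?S = 3" using p by auto
      fix x y assume "x \<in> ?S" "y \<in> ?S"
      then show "?R\<^sup>*\<^sup>* x y" by (rule rtranclp_trans[OF tov fromv])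
    qed
    then show False using \<open>\<not> has_connected_sub3 n E\<close> by blast
  qed
qed



theorem corollary2p4:
  fixes n :: nat and E :: "nat \<Rightarrow> nat \<Rightarrow> bool"
  assumes "sgraph n E"
    and "\<exists>i j. E i j"
  shows "(union_of_K2 n E \<longleftrightarrow> \<not> has_connected_sub3 n E)
       \<and> (union_of_K2 n E \<longleftrightarrow> HG n E = {0..})
       \<and> (union_of_K2 n E \<longleftrightarrow> (0::real) \<in> HG n E)
       \<and> (union_of_K2 n E \<longleftrightarrow> \<not> HG n E \<subseteq> {1..})
       \<and> (union_of_K2 n E \<longleftrightarrow> CE_H n E = 0)"
proof -
  note g = assms(1)
  obtain i j where e: "E i j" using assms(2) by blast
  show ?thesis
  proof (cases "union_of_K2 n E")
    case True
    have Pw_iff: "Pw n E b \<longleftrightarrow> b \<ge> 0" for b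
      using Pw_union[OF g True] Pw_edge_neg[OF g e] by (cases "b < 0") auto
    have HG: "HG n E = {0..}" unfolding HG_Pw using Pw_iff by auto
    have CE: "CE_H n E = 0" unfolding CE_Pw
    proof (rule Least_equality)
      show "\<forall>b\<ge>0. Pw n E b" using Pw_iff by simp
      fix y :: real assume "\<forall>b\<ge>y. Pw n E b"
      then have "Pw n E y" by simp
      then show "0 \<le> y" using Pw_iff by simp
    qed
    show ?thesis using True union_iff_sub3[OF g] HG CE by auto
  next
    case False
    obtain u v w where p: "u \<in> {1..n}" "v \<in> {1..n}" "w \<in> {1..n}" "u \<noteq> v" "v \<noteq> w" "u \<noteq> w"
      "E v u" "E u v" "E v w" "E w v" using not_union_path[OF g False] by blast
    have ge1: "Pw n E b \<Longrightarrow> b \<ge> 1" for b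
      using Pw_path_neg[OF p] by (cases "b < 1") auto
    have HG1: "HG n E \<subseteq> {1..}" unfolding HG_Pw using ge1 by auto
    then have H0: "(0::real) \<notin> HG n E" by auto
    then have HG2: "HG n E \<noteq> {0..}" by auto
    define S where "S = {a::real. \<forall>b\<ge>a. Pw n E b}"
    have ne: "max 0 (real n) \<in> S" unfolding S_def by (auto intro!: Pw_FH)
    have Sge: "a \<in> S \<Longrightarrow> a \<ge> 1" for a unfolding S_def using ge1 by auto
    have bdd: "bdd_below S" unfolding bdd_below_def using Sge by blast
    define c where "c = Inf S"
    have gt: "Pw n E b" if "b > c" for b
    proof -
      have "\<exists>s\<in>S. s < b" using cInf_less_iff[of S b] ne bdd that c_def by auto
      then show ?thesis unfolding S_def by force
    qed
    have Pc: "Pw n E c" by (rule Pw_closed) (use gt in auto)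
    have cS: "c \<in> S" unfolding S_def using Pc gt by (auto simp: le_less)
    have CE: "CE_H n E = c" unfolding CE_Pw
    proof (rule Least_equality)
      show "\<forall>b\<ge>c. Pw n E b" using cS unfolding S_def by simp
      fix y :: real assume "\<forall>b\<ge>y. Pw n E b"
      then have "y \<in> S" unfolding S_def by simp
      then show "c \<le> y" unfolding c_def using bdd by (simp add: cInf_lower)
    qed
    have "c \<ge> 1" using Sge[OF cS] .
    then have "CE_H n E \<noteq> 0" using CE by simp
    then show ?thesis using False union_iff_sub3[OF g] HG1 H0 HG2 by auto
  qed
qed

end
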